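(* For every integer $w\geq 3$, $$\sum_{i=1}^{w-2}\sigma(w-i,i)=(w-1)\,\lambda(w).$$
   Context: For integers $t\geq 1$ and $n\geq 1$ let $S_n^{(t)}=\sum_{k=1}^{n}\frac{1}{(2k-1)^t}$, and for integers $s\geq 2$, $t\geq 1$ let $\sigma(s,t)=\sum_{n\geq 1}\frac{S_n^{(t)}}{n^s}$. For real $s>1$, $\lambda(s)=\sum_{n\geq 1}\frac{1}{(2n-1)^s}=(1-2^{-s})\zeta(s)$. *)

theory Defs
  imports "HOL-Analysis.Analysis"
begin

definition S_odd :: "nat \<Rightarrow> nat \<Rightarrow> real" where
  "S_odd t n = (\<Sum>k=1..n. 1 / (2 * real k - 1) ^ t)"

definition sigma_sum :: "nat \<Rightarrow> nat \<Rightarrow> real" where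
  "sigma_sum s t = (\<Sum>n. S_odd t (Suc n) / real (Suc n) ^ s)"

definition lambda_odd :: "nat \<Rightarrow> real" where
  "lambda_odd s = (\<Sum>n. 1 / (2 * real (Suc n) - 1) ^ s)"

end

theory Submission
  imports Defs
begin


lemma rows_has_sum:
  fixes f :: "nat \<times> nat \<Rightarrow> real"
  assumes nn: "\<And>p. p \<in> X \<Longrightarrow> f p \<ge> 0"
    and r: "\<And>x. ((\<lambda>y. f (x,y)) has_sum g x) {y. (x,y) \<in> X}"
    and g: "(g has_sum S) UNIV"
  shows "(f has_sum S) X"
proof -
  have X: "X = Sigma UNIV (\<lambda>x. {y. (x,y)\<in>X})" by auto
  have "f summable_on Sigma UNIV (\<lambda>x. {y. (x,y)\<in>X})"
    by (rule summable_on_SigmaI[where g=g]) (use r g nn X in \<open>auto simp: summable_on_def\<close>)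
  then have "(f has_sum S) (Sigma UNIV (\<lambda>x. {y. (x,y)\<in>X}))"
    by (intro has_sum_SigmaI[where g=g] r g)
  then show ?thesis using X by simp
qed

lemma cols_has_sum:
  fixes f :: "nat \<times> nat \<Rightarrow> real"
  assumes nn: "\<And>p. p \<in> X \<Longrightarrow> f p \<ge> 0"
    and r: "\<And>y. ((\<lambda>x. f (x,y)) has_sum g y) {x. (x,y) \<in> X}"
    and g: "(g has_sum S) UNIV"
  shows "(f has_sum S) X"
proof -
  have "((f \<circ> prod.swap) has_sum S) (prod.swap ` X)"
  proof (rule rows_has_sum[where g=g])
    show "((\<lambda>y. (f \<circ> prod.swap) (x, y)) has_sum g x) {y. (x, y) \<in> prod.swap ` X}" for x
    proof -
      have "{y. (x, y) \<in> prod.swap ` X} = {y. (y,x) \<in> X}" by force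
      then show ?thesis using r[of x] by simp
    qed
  qed (use nn g in auto)
  then have "(((f \<circ> prod.swap) \<circ> prod.swap) has_sum S) X"
    by (subst (asm) has_sum_reindex) auto
  then show ?thesis by (simp add: comp_def)
qed

lemma rows_D:
  fixes f :: "nat \<times> nat \<Rightarrow> real"
  assumes "(f has_sum S) X"
    and r: "\<And>x. ((\<lambda>y. f (x,y)) has_sum g x) {y. (x,y) \<in> X}"
  shows "(g has_sum S) UNIV"
proof -
  have X: "X = Sigma UNIV (\<lambda>x. {y. (x,y)\<in>X})" by auto
  show ?thesis
    by (rule has_sum_SigmaD[where B="\<lambda>x. {y. (x,y)\<in>X}" and f=f]) (use assms X in auto)
qed

lemma harm_sqrt: "(harm n :: real) \<le> 2 * sqrt (real n)"
proof (induction n)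
  case 0 then show ?case by (simp add: harm_def)
next
  case (Suc n)
  have a: "sqrt (real (Suc n)) \<le> real (Suc n)"
    by (simp add: real_sqrt_le_iff' power2_eq_square)
  have s: "sqrt (real n) \<le> sqrt (real (Suc n))" by simp
  have p: "sqrt (real (Suc n)) > 0" by simp
  have "(sqrt (real (Suc n)) - sqrt n) * (sqrt (real (Suc n)) + sqrt n) = 1"
    by (simp add: algebra_simps)
  then have "sqrt (real (Suc n)) - sqrt n \<ge> 1 / (2 * sqrt (real (Suc n)))"
    using s p by (smt (verit, ccfv_SIG) divide_right_mono le_divide_eq mult_le_cancel_left_pos nonzero_mult_div_cancel_left)
  moreover have "1 / (2 * sqrt (real (Suc n))) \<ge> 1 / (2 * real (Suc n))"
    using a p by (intro divide_left_mono) auto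
  moreover have "1 / real (Suc n) = 2 * (1 / (2 * real (Suc n)))" by (simp add: field_simps)
  ultimately have "1 / real (Suc n) \<le> 2 * (sqrt (real (Suc n)) - sqrt n)" by (smt (verit))
  moreover have "harm (Suc n) = harm n + 1/real(Suc n)" by (simp add: harm_Suc inverse_eq_divide)
  ultimately show ?case using Suc by (smt (verit))
qed

lemma pair_identity:
  fixes n j :: real and m :: nat
  assumes "n > 0" "j > 0" "n \<noteq> j"
  shows "(\<Sum>i=1..m. 1/(n^(m+2-i) * j^i)) = 1/(j^m*n*(n-j)) - 1/(n^(m+1)*(n-j))"
proof (induction m)
  case 0 then show ?case using assms by (simp add: field_simps)
next
  case (Suc m)
  have e1: "(\<Sum>i=1..Suc m. 1/(n^(Suc m+2-i) * j^i)) = (\<Sum>i=1..m. 1/(n^(Suc m+2-i) * j^i)) + 1/(n^2*j^(Suc m))"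
    by (simp add: sum.cl_ivl_Suc)
  have e2: "(\<Sum>i=1..m. 1/(n^(Suc m+2-i) * j^i)) = (\<Sum>i=1..m. 1/(n^(m+2-i) * j^i)) / n"
    unfolding sum_divide_distrib
    by (intro sum.cong refl) (auto simp: Suc_diff_le)
  have e3: "(1/(j^m*n*(n-j)) - 1/(n^(m+1)*(n-j)))/n + 1/(n^2*j^(Suc m)) = 1/(j^(Suc m)*n*(n-j)) - 1/(n^(Suc m+1)*(n-j))"
  proof -
    have d: "n - j \<noteq> 0" using assms by simp
    show ?thesis using assms d
      by (simp add: divide_simps) (simp add: algebra_simps power2_eq_square)
  qed
  show ?case unfolding e1 e2 Suc.IH e3 ..

qed



lemma tail_sum:
  assumes "j \<ge> 1"
  shows "((\<lambda>n. 1/(real n * (real n - real j))) has_sum harm j / real j) {n. j < n}"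
proof -
  have tel: "(\<lambda>m. 1/real(m+1+r) - 1/real(Suc m+1+r)) sums (1/real(1+r))" for r
  proof -
    have "(\<lambda>m. inverse (real (Suc (m + r)))) \<longlonglongrightarrow> 0"
      using LIMSEQ_ignore_initial_segment[OF LIMSEQ_inverse_real_of_nat, of r] by simp
    then have "(\<lambda>m. 1/real(m+1+r)) \<longlonglongrightarrow> 0"
      by (simp add: inverse_eq_divide add_ac)
    from telescope_sums'[OF this] show ?thesis by simp
  qed
  have "(\<lambda>m. \<Sum>r<j. 1/real(m+1+r) - 1/real(Suc m+1+r)) sums (\<Sum>r<j. 1/real(1+r))"
    by (rule sums_sum) (rule tel)
  moreover have "(\<Sum>r<j. 1/real(m+1+r) - 1/real(Suc m+1+r)) = 1/real(m+1) - 1/real(m+1+j)" for m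
    using sum_lessThan_telescope'[of "\<lambda>r. 1/real(m+1+r)" j] by (simp add: add_ac)
  moreover have "(\<Sum>r<j. 1/real(1+r)) = harm j"
    by (simp add: harm_altdef inverse_eq_divide)
  ultimately have "(\<lambda>m. 1/real(m+1) - 1/real(m+1+j)) sums harm j" by simp
  then have "(\<lambda>m. (1/real(m+1) - 1/real(m+1+j)) / real j) sums (harm j / real j)"
    by (rule sums_divide)
  moreover have "(1/real(m+1) - 1/real(m+1+j)) / real j = 1/(real (m+1+j) * (real (m+1+j) - real j))" for m
  proof -
    have jp: "real j > 0" using assms by simp
    have e1: "(1/real(m+1) - 1/real(m+1+j)) = real j / (real (m+1) * real (m+1+j))"
      by (simp add: field_simps)
    have e2: "real (m+1+j) - real j = real (m+1)" by simp
    show ?thesis unfolding e1 e2 using jp by (simp add: mult.commute)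
  qed
  ultimately have s: "(\<lambda>m. 1/(real (m+1+j) * (real (m+1+j) - real j))) sums (harm j / real j)" by simp
  have h: "((\<lambda>m. 1/(real (m+1+j) * (real (m+1+j) - real j))) has_sum (harm j / real j)) UNIV"
    by (rule sums_nonneg_imp_has_sum[OF s]) simp
  show ?thesis
    by (rule has_sum_reindex_bij_witness[of _ "\<lambda>n. n - j - 1" "\<lambda>m. m+1+j", THEN iffD1, OF _ _ _ _ _ refl h]) auto
qed

lemma mid_sum:
  assumes "odd j"
  shows "(\<Sum>n\<in>{n. n<j \<and> j<2*n}. 1/(real n * (real j - real n))) = harm (j-1) / real j"
proof -
  let ?A = "{n. n<j \<and> j<2*n}" and ?B = "{d. 0<d \<and> 2*d<j}"
  have j0: "j > 0" using assms by (cases j) auto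
  have finA: "finite ?A" by (rule finite_subset[of _ "{..<j}"]) auto
  have finB: "finite ?B" by (rule finite_subset[of _ "{..<j}"]) auto
  have "(\<Sum>n\<in>?A. 1/(real n * (real j - real n))) = (\<Sum>n\<in>?A. (1/real n + 1/(real j - real n)) / real j)"
    by (intro sum.cong refl) (auto simp: field_simps)
  also have "\<dots> = ((\<Sum>n\<in>?A. 1/real n) + (\<Sum>n\<in>?A. 1/(real j - real n))) / real j"
    by (simp add: sum_divide_distrib sum.distrib add_divide_distrib)
  also have "(\<Sum>n\<in>?A. 1/(real j - real n)) = (\<Sum>d\<in>?B. 1/real d)"
    by (rule sum.reindex_bij_witness[of _ "\<lambda>d. j - d" "\<lambda>n. j - n"]) (auto simp: of_nat_diff)
  also have "(\<Sum>n\<in>?A. 1/real n) + (\<Sum>d\<in>?B. 1/real d) = (\<Sum>n\<in>?A \<union> ?B. 1/real n)"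
    by (rule sum.union_disjoint[symmetric]) (use finA finB in auto)
  also have "?A \<union> ?B = {1..j-1}" using assms by (auto elim!: oddE; presburger)
  also have "(\<Sum>n\<in>{1..j-1}. 1/real n) = harm (j-1)"
    by (simp add: harm_def inverse_eq_divide)
  finally show ?thesis .
qed

lemma row_eq:
  "(\<Sum>j\<in>{j. odd j \<and> j<n}. 1/(real n - real j)) = (\<Sum>j\<in>{j. odd j \<and> n<j \<and> j<2*n}. 1/(real j - real n))"
  by (rule sum.reindex_bij_witness[of _ "\<lambda>j. 2*n - j" "\<lambda>j. 2*n - j"]) (auto simp: of_nat_diff odd_pos)

lemma row_le:
  "(\<Sum>j\<in>{j. odd j \<and> j<n}. 1/(real n - real j)) \<le> harm n"
proof -
  have "(\<Sum>j\<in>{j. odd j \<and> j<n}. 1/(real n - real j)) \<le> (\<Sum>j\<in>{..<n}. 1/(real n - real j))"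
    by (rule sum_mono2) auto
  also have "\<dots> = (\<Sum>d\<in>{1..n}. 1/real d)"
    by (rule sum.reindex_bij_witness[of _ "\<lambda>d. n - d" "\<lambda>j. n - j"]) (auto simp: of_nat_diff)
  also have "\<dots> = harm n" by (simp add: harm_def inverse_eq_divide)
  finally show ?thesis .
qed

lemma S_odd_row: "S_odd t n = (\<Sum>j\<in>{j. odd j \<and> j<2*n}. 1/real j^t)"
  unfolding S_odd_def
  by (rule sum.reindex_bij_witness[of _ "\<lambda>j. (j+1) div 2" "\<lambda>k. 2*k-1"])
     (auto elim!: oddE simp: of_nat_diff)

lemma lambda_has_sum:
  assumes "w \<ge> 2"
  shows "((\<lambda>j. 1/real j^w) has_sum lambda_odd w) {j. odd j}"
proof -
  have "summable (\<lambda>n. 1 / (2 * real (Suc n) - 1) ^ w)"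
  proof (rule summable_comparison_test')
    show "summable (\<lambda>n. inverse (real (Suc n) ^ 2))"
      using inverse_power_summable[of 2] summable_Suc_iff[of "\<lambda>n. inverse (real n ^ 2)"] by simp
    show "norm (1 / (2 * real (Suc n) - 1) ^ w) \<le> inverse (real (Suc n) ^ 2)" for n
    proof -
      have "real (Suc n) ^ 2 \<le> (2 * real (Suc n) - 1) ^ 2" by (intro power_mono) auto
      also have "\<dots> \<le> (2 * real (Suc n) - 1) ^ w" using assms by (intro power_increasing) auto
      finally show ?thesis by (simp add: field_simps)
    qed
  qed
  then have "((\<lambda>n. 1 / (2 * real (Suc n) - 1) ^ w) has_sum lambda_odd w) UNIV"
    unfolding lambda_odd_def by (intro sums_nonneg_imp_has_sum summable_sums) (auto intro!: divide_nonneg_nonneg zero_le_power)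
  moreover have "((\<lambda>n. 1 / (2 * real (Suc n) - 1) ^ w) has_sum lambda_odd w) UNIV = ((\<lambda>j. 1/real j^w) has_sum lambda_odd w) {j. odd j}"
    by (rule has_sum_reindex_bij_witness[of UNIV "\<lambda>j. (j - 1) div 2" "\<lambda>n. 2*n+1"]) (auto elim!: oddE simp: algebra_simps)
  ultimately show ?thesis by simp
qed



lemma has_sum_diff':
  fixes f g :: "'a \<Rightarrow> real"
  assumes "(f has_sum a) A" "(g has_sum b) A"
  shows "((\<lambda>x. f x - g x) has_sum (a - b)) A"
proof -
  have "((\<lambda>x. - g x) has_sum (- b)) A" using assms(2) by (simp add: has_sum_uminus)
  from has_sum_add[OF assms(1) this] show ?thesis by simp
qed

lemma has_sum_sum_fun:
  fixes f :: "'i \<Rightarrow> 'a \<Rightarrow> real"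
  assumes "finite I" "\<And>i. i \<in> I \<Longrightarrow> (f i has_sum s i) A"
  shows "((\<lambda>x. \<Sum>i\<in>I. f i x) has_sum (\<Sum>i\<in>I. s i)) A"
  using assms
proof (induction I rule: finite_induct)
  case empty then show ?case by simp
next
  case (insert i I)
  then show ?case by (simp add: has_sum_add)
qed

lemma harm_bound:
  assumes "w \<ge> 3"
  shows "harm j / real j ^ (w-1) \<le> 2 * real j powr (-3/2)"
proof (cases "j = 0")
  case True then show ?thesis by (simp add: harm_def)
next
  case False
  then have jp: "real j \<ge> 1" by simp
  have "harm j / real j ^ (w-1) \<le> harm j / real j ^ 2"
    using jp assms by (intro divide_left_mono harm_nonneg power_increasing) auto
  also have "\<dots> \<le> 2 * sqrt (real j) / real j ^ 2"
    using harm_sqrt[of j] by (intro divide_right_mono) auto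
  also have "2 * sqrt (real j) / real j ^ 2 = 2 * real j powr (-3/2)"
  proof -
    have "sqrt (real j) = real j powr (1/2)" by (simp add: powr_half_sqrt)
    moreover have "real j ^ 2 = real j powr 2" using jp by (simp add: powr_realpow)
    moreover have "real j powr (-3/2) = real j powr (1/2 - 2)" by simp
    moreover have "real j powr (1/2 - 2) = real j powr (1/2) / real j powr 2" by (rule powr_diff)
    ultimately have "sqrt (real j) / real j ^ 2 = real j powr (-3/2)" by metis
    then show ?thesis by simp
  qed
  finally show ?thesis .
qed

lemma bound_summable: "(\<lambda>j. 2 * real j powr (-3/2)) summable_on (UNIV :: nat set)"
proof -
  have "summable (\<lambda>j. real j powr (-3/2))" by (simp add: summable_real_powr_iff)
  then have "summable (\<lambda>j. 2 * real j powr (-3/2))" by (rule summable_mult)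
  then show ?thesis by (subst summable_on_UNIV_nonneg_real_iff) auto
qed

definition T :: "nat \<Rightarrow> nat \<Rightarrow> nat \<Rightarrow> real" where
  "T w n j = (\<Sum>i=1..w-2. 1/(real n^(w-i) * real j^i))"

lemma T_off:
  assumes "w \<ge> 2" "n > 0" "j > 0" "n \<noteq> j"
  shows "T w n j = 1/(real j^(w-2)*real n*(real n - real j)) - 1/(real n^(w-1)*(real n-real j))"
proof -
  have e: "w - 2 + 2 = w" using assms by simp
  have "T w n j = (\<Sum>i=1..w-2. 1/(real n^((w-2)+2-i) * real j^i))"
    unfolding T_def e ..
  also have "\<dots> = 1/(real j^(w-2)*real n*(real n - real j)) - 1/(real n^((w-2)+1)*(real n-real j))"
    by (rule pair_identity) (use assms in auto)
  moreover have "w - 1 = Suc (w - 2)" using assms by simp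
  ultimately show ?thesis by (simp add: e)
qed

lemma T_diag: "T w j j = real (w-2) / real j^w"
proof -
  have "T w j j = (\<Sum>i=1..w-2. 1/real j^w)"
    unfolding T_def
    by (intro sum.cong refl) (auto simp: power_add[symmetric])
  then show ?thesis by simp
qed

lemma T_nonneg: "T w n j \<ge> 0"
  unfolding T_def by (intro sum_nonneg) auto



context
  fixes w :: nat
  assumes w3: "w \<ge> 3"
begin

definition "colP j = (if odd j then harm j / real j ^ (w-1) else (0::real))"
definition "colP' j = (if odd j then harm (j-1) / real j ^ (w-1) else (0::real))"
definition "rowQ n = (\<Sum>j\<in>{j. odd j \<and> j<n}. 1/(real n^(w-1)*(real n-real j)))"

lemma colP_summable: "colP summable_on UNIV"
  by (rule summable_on_comparison_test[OF bound_summable])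
     (use harm_bound[OF w3] in \<open>auto simp: colP_def intro!: divide_nonneg_nonneg harm_nonneg\<close>)

lemma colP'_summable: "colP' summable_on UNIV"
proof (rule summable_on_comparison_test[OF colP_summable])
  show "colP' x \<le> colP x" for x
    unfolding colP'_def colP_def by (auto intro!: divide_right_mono harm_mono)
  show "0 \<le> colP' x" for x
    unfolding colP'_def by (auto intro!: divide_nonneg_nonneg harm_nonneg)
qed

lemma rowQ_summable: "rowQ summable_on UNIV"
proof (rule summable_on_comparison_test[OF bound_summable])
  fix n
  have "rowQ n = (\<Sum>j\<in>{j. odd j \<and> j<n}. 1/(real n - real j)) / real n^(w-1)"
    unfolding rowQ_def sum_divide_distrib by (intro sum.cong refl) auto
  also have "\<dots> \<le> harm n / real n^(w-1)"
    by (intro divide_right_mono row_le) auto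
  also have "\<dots> \<le> 2 * real n powr (-3/2)" by (rule harm_bound[OF w3])
  finally show "rowQ n \<le> 2 * real n powr (-3/2)" .
  show "0 \<le> rowQ n" unfolding rowQ_def by (intro sum_nonneg) auto
qed

lemma P_Ra: "((\<lambda>(n,j). 1/(real j^(w-2)*real n*(real n - real j))) has_sum infsum colP UNIV)
               {(n,j). odd j \<and> j < n}"
proof (rule cols_has_sum[where g=colP])
  show "(colP has_sum infsum colP UNIV) UNIV" using colP_summable by simp
  fix j
  show "((\<lambda>n. (\<lambda>(n,j). 1/(real j^(w-2)*real n*(real n - real j))) (n, j)) has_sum colP j)
          {n. (n, j) \<in> {(n,j). odd j \<and> j < n}}"
  proof (cases "odd j")
    case True
    then have j1: "j \<ge> 1" by (cases j) auto
    have "((\<lambda>n. 1/real j^(w-2) * (1/(real n * (real n - real j)))) has_sum (1/real j^(w-2) * (harm j / real j))) {n. j < n}"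
      by (rule has_sum_cmult_right[OF tail_sum[OF j1]])
    moreover have "1/real j^(w-2) * (harm j / real j) = colP j"
    proof -
      have "w - 1 = Suc (w-2)" using w3 by simp
      then show ?thesis using True by (simp add: colP_def)
    qed
    ultimately show ?thesis using True by (simp add: mult.assoc)
  next
    case False then show ?thesis by (simp add: colP_def)
  qed
qed (auto intro!: divide_nonneg_nonneg mult_nonneg_nonneg)

lemma P_Rb: "((\<lambda>(n,j). 1/(real j^(w-2)*real n*(real j - real n))) has_sum infsum colP' UNIV)
               {(n,j). odd j \<and> n < j \<and> j < 2*n}"
proof (rule cols_has_sum[where g=colP'])
  show "(colP' has_sum infsum colP' UNIV) UNIV" using colP'_summable by simp
  fix j
  show "((\<lambda>n. (\<lambda>(n,j). 1/(real j^(w-2)*real n*(real j - real n))) (n, j)) has_sum colP' j)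
          {n. (n, j) \<in> {(n,j). odd j \<and> n < j \<and> j < 2*n}}"
  proof (cases "odd j")
    case True
    have fin: "finite {n. n<j \<and> j<2*n}" by (rule finite_subset[of _ "{..<j}"]) auto
    have "(\<Sum>n\<in>{n. n<j \<and> j<2*n}. 1/(real j^(w-2)*real n*(real j - real n)))
          = 1/real j^(w-2) * (\<Sum>n\<in>{n. n<j \<and> j<2*n}. 1/(real n * (real j - real n)))"
      unfolding sum_distrib_left by (intro sum.cong refl) auto
    also have "\<dots> = 1/real j^(w-2) * (harm (j-1) / real j)" by (simp add: mid_sum[OF True])
    also have "\<dots> = colP' j"
    proof -
      have "w - 1 = Suc (w-2)" using w3 by simp
      then show ?thesis using True by (simp add: colP'_def)
    qed
    finally show ?thesis using True fin by (intro has_sum_finiteI) (auto simp: conj_commute)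
  next
    case False then show ?thesis by (simp add: colP'_def)
  qed
qed (auto intro!: divide_nonneg_nonneg mult_nonneg_nonneg)

lemma Q_Ra: "((\<lambda>(n,j). 1/(real n^(w-1)*(real n - real j))) has_sum infsum rowQ UNIV)
               {(n,j). odd j \<and> j < n}"
proof (rule rows_has_sum[where g=rowQ])
  show "(rowQ has_sum infsum rowQ UNIV) UNIV" using rowQ_summable by simp
  fix n :: nat
  have fin: "finite {j. odd j \<and> j<n}" by (rule finite_subset[of _ "{..<n}"]) auto
  show "((\<lambda>j. (\<lambda>(n,j). 1/(real n^(w-1)*(real n - real j))) (n, j)) has_sum rowQ n)
          {j. (n, j) \<in> {(n,j). odd j \<and> j < n}}"
    using fin by (intro has_sum_finiteI) (auto simp: rowQ_def)
qed (auto intro!: divide_nonneg_nonneg mult_nonneg_nonneg)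

lemma Q_Rb: "((\<lambda>(n,j). 1/(real n^(w-1)*(real j - real n))) has_sum infsum rowQ UNIV)
               {(n,j). odd j \<and> n < j \<and> j < 2*n}"
proof (rule rows_has_sum[where g=rowQ])
  show "(rowQ has_sum infsum rowQ UNIV) UNIV" using rowQ_summable by simp
  fix n :: nat
  have fin: "finite {j. odd j \<and> n < j \<and> j<2*n}" by (rule finite_subset[of _ "{..<2*n}"]) auto
  have "rowQ n = (\<Sum>j\<in>{j. odd j \<and> j<n}. 1/(real n - real j)) / real n^(w-1)"
    unfolding rowQ_def sum_divide_distrib by (intro sum.cong refl) auto
  also have "\<dots> = (\<Sum>j\<in>{j. odd j \<and> n<j \<and> j<2*n}. 1/(real j - real n)) / real n^(w-1)"
    by (simp add: row_eq)
  also have "\<dots> = (\<Sum>j\<in>{j. odd j \<and> n<j \<and> j<2*n}. 1/(real n^(w-1)*(real j - real n)))"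
    unfolding sum_divide_distrib by (intro sum.cong refl) auto
  finally show "((\<lambda>j. (\<lambda>(n,j). 1/(real n^(w-1)*(real j - real n))) (n, j)) has_sum rowQ n)
          {j. (n, j) \<in> {(n,j). odd j \<and> n < j \<and> j < 2*n}}"
    using fin by (intro has_sum_finiteI) auto
qed (auto intro!: divide_nonneg_nonneg mult_nonneg_nonneg)

end


lemma has_sum_congI: "(f has_sum s) A \<Longrightarrow> (\<And>x. x\<in>A \<Longrightarrow> f x = g x) \<Longrightarrow> (g has_sum s) A"
  using has_sum_cong by metis

context
  fixes w :: nat
  assumes w3: "w \<ge> 3"
begin

lemma T_R: "((\<lambda>(n,j). T w n j) has_sum real(w-1) * lambda_odd w) {(n,j). odd j \<and> j<2*n}"
proof -
  define \<alpha> where "\<alpha> = infsum (colP w) UNIV"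
  define \<beta> where "\<beta> = infsum (colP' w) UNIV"
  define \<gamma> where "\<gamma> = infsum (rowQ w) UNIV"
  define \<Lambda> where "\<Lambda> = lambda_odd w"
  let ?Ra = "{(n::nat,j::nat). odd j \<and> j < n}"
  let ?Rb = "{(n::nat,j::nat). odd j \<and> n < j \<and> j < 2*n}"
  let ?Rc = "{(n::nat,j::nat). odd j \<and> n = j}"
  have w2: "w \<ge> 2" using w3 by simp
  have hA: "((\<lambda>(n,j). T w n j) has_sum \<alpha> - \<gamma>) ?Ra"
    unfolding \<alpha>_def \<gamma>_def
  proof (rule has_sum_congI[OF has_sum_diff'[OF P_Ra[OF w3] Q_Ra[OF w3]]])
    fix x assume "x \<in> ?Ra"
    then obtain n j where x: "x = (n,j)" "odd j" "j < n" by auto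
    then have "j > 0" by (cases j) auto
    then show "(\<lambda>(n,j). 1/(real j^(w-2)*real n*(real n - real j))) x - (\<lambda>(n,j). 1/(real n^(w-1)*(real n - real j))) x = (\<lambda>(n,j). T w n j) x"
      using x w2 by (simp add: T_off)
  qed
  have hB: "((\<lambda>(n,j). T w n j) has_sum \<gamma> - \<beta>) ?Rb"
    unfolding \<beta>_def \<gamma>_def
  proof (rule has_sum_congI[OF has_sum_diff'[OF Q_Rb[OF w3] P_Rb[OF w3]]])
    fix x assume "x \<in> ?Rb"
    then obtain n j where x: "x = (n,j)" "odd j" "n < j" "j < 2*n" by auto
    then have "j > 0" by (cases j) auto
    moreover have neg: "\<And>A::real. 1/(A*(real n - real j)) = - (1/(A*(real j - real n)))"
      by (metis minus_diff_eq minus_divide_right mult_minus_right)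
    ultimately show "(\<lambda>(n,j). 1/(real n^(w-1)*(real j - real n))) x - (\<lambda>(n,j). 1/(real j^(w-2)*real n*(real j - real n))) x = (\<lambda>(n,j). T w n j) x"
      using x w2 by (simp add: T_off neg)
  qed
  have hC: "((\<lambda>(n,j). T w n j) has_sum real (w-2) * \<Lambda>) ?Rc"
  proof -
    have "((\<lambda>j. real (w-2) * (1/real j^w)) has_sum real (w-2) * \<Lambda>) {j. odd j}"
      unfolding \<Lambda>_def by (rule has_sum_cmult_right[OF lambda_has_sum[OF w2]])
    moreover have "((\<lambda>j. real (w-2) * (1/real j^w)) has_sum real (w-2) * \<Lambda>) {j. odd j}
        = ((\<lambda>(n,j). T w n j) has_sum real (w-2) * \<Lambda>) ?Rc"
      by (rule has_sum_reindex_bij_witness[of _ fst "\<lambda>j. (j,j)"]) (auto simp: T_diag)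
    ultimately show ?thesis by simp
  qed
  have hL: "((\<lambda>j. colP w j - colP' w j) has_sum \<alpha> - \<beta>) UNIV"
    unfolding \<alpha>_def \<beta>_def
    by (rule has_sum_diff') (simp_all add: colP_summable[OF w3] colP'_summable[OF w3])
  have hL2: "((\<lambda>j. colP w j - colP' w j) has_sum \<Lambda>) UNIV"
  proof -
    have "((\<lambda>j. 1/real j^w) has_sum \<Lambda>) {j. odd j}"
      unfolding \<Lambda>_def by (rule lambda_has_sum[OF w2])
    moreover have "((\<lambda>j. 1/real j^w) has_sum \<Lambda>) {j. odd j} = ((\<lambda>j. colP w j - colP' w j) has_sum \<Lambda>) UNIV"
    proof (rule has_sum_cong_neutral)
      fix j :: nat assume j: "j \<in> {j. odd j} \<inter> UNIV"
      then obtain k where k: "j = Suc k" by (cases j) auto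
      have "harm j = harm k + 1 / real j" unfolding k by (simp add: harm_Suc inverse_eq_divide)
      moreover have "w - 1 = w - Suc 0" by simp
      moreover have "real j ^ w = real j ^ (w - 1) * real j"
        using w2 by (metis One_nat_def Suc_le_eq le_trans one_le_numeral power_minus_mult zero_less_Suc)
      ultimately show "1 / real j ^ w = colP w j - colP' w j"
        using j unfolding colP_def[OF w3] colP'_def[OF w3] k by (simp add: add_divide_distrib)
    qed (auto simp: colP_def[OF w3] colP'_def[OF w3])
    ultimately show ?thesis by simp
  qed
  have ab: "\<alpha> - \<beta> = \<Lambda>" using has_sum_unique[OF hL hL2] .
  have "((\<lambda>(n,j). T w n j) has_sum ((\<alpha> - \<gamma>) + (\<gamma> - \<beta>)) + real (w-2) * \<Lambda>) ((?Ra \<union> ?Rb) \<union> ?Rc)"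
    by (intro has_sum_Un_disjoint hA hB hC) auto
  moreover have "(?Ra \<union> ?Rb) \<union> ?Rc = {(n,j). odd j \<and> j<2*n}" by (auto elim!: oddE)
  moreover have "((\<alpha> - \<gamma>) + (\<gamma> - \<beta>)) + real (w-2) * \<Lambda> = real (w-1) * lambda_odd w"
    using ab w2 by (simp add: \<Lambda>_def of_nat_diff algebra_simps)
  ultimately show ?thesis by simp
qed

end


theorem mainTheorem1:
  fixes w :: nat
  assumes "w \<ge> 3"
  shows "(\<Sum>i=1..w-2. sigma_sum (w - i) i) = real (w - 1) * lambda_odd w"
proof -
  let ?R = "{(n::nat,j::nat). odd j \<and> j<2*n}"
  define F where "F i = (\<lambda>(n::nat,j::nat). 1/(real n^(w-i) * real j^i))" for i :: nat
  have hT: "((\<lambda>(n,j). T w n j) has_sum real(w-1)*lambda_odd w) ?R" by (rule T_R[OF assms])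
  have Tsum: "(\<lambda>(n,j). T w n j) summable_on ?R" using hT by (auto simp: summable_on_def)
  have Fs: "F i summable_on ?R" if "i \<in> {1..w-2}" for i
  proof (rule summable_on_comparison_test[OF Tsum])
    fix x assume "x \<in> ?R"
    obtain a b where x: "x = (a,b)" by (cases x)
    have "1/(real a^(w-i) * real b^i) \<le> (\<Sum>i\<in>{1..w-2}. 1/(real a^(w-i) * real b^i))"
      by (rule member_le_sum[OF that]) auto
    then show "F i x \<le> (\<lambda>(n,j). T w n j) x"
      unfolding F_def T_def x by simp
    show "0 \<le> F i x" unfolding F_def by (cases x) auto
  qed
  have sig: "sigma_sum (w-i) i = infsum (F i) ?R" if "i \<in> {1..w-2}" for i
  proof -
    let ?g = "\<lambda>n. S_odd i n / real n^(w-i)"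
    have "(?g has_sum infsum (F i) ?R) UNIV"
    proof (rule rows_D[OF has_sum_infsum[OF Fs[OF that]]])
      fix n :: nat
      have fin: "finite {j. odd j \<and> j<2*n}" by (rule finite_subset[of _ "{..<2*n}"]) auto
      have "?g n = (\<Sum>j\<in>{j. odd j \<and> j<2*n}. F i (n,j))"
        unfolding S_odd_row sum_divide_distrib F_def by (intro sum.cong refl) (simp add: mult.commute)
      then show "((\<lambda>j. F i (n,j)) has_sum ?g n) {j. (n,j) \<in> ?R}"
        using fin by (intro has_sum_finiteI) auto
    qed
    then have "?g sums infsum (F i) ?R" by (rule has_sum_imp_sums)
    moreover have "S_odd i 0 = 0" by (simp add: S_odd_def)
    ultimately have "(\<lambda>n. ?g (Suc n)) sums infsum (F i) ?R" by (subst sums_Suc_iff) simp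
    then show ?thesis unfolding sigma_sum_def by (rule sums_unique[symmetric])
  qed
  have "(\<Sum>i=1..w-2. sigma_sum (w-i) i) = (\<Sum>i=1..w-2. infsum (F i) ?R)"
    by (rule sum.cong) (simp_all add: sig)
  also have "\<dots> = infsum (\<lambda>p. \<Sum>i=1..w-2. F i p) ?R"
    by (rule infsumI[symmetric], rule has_sum_sum_fun) (simp_all add: Fs)
  also have "(\<lambda>p. \<Sum>i=1..w-2. F i p) = (\<lambda>(n,j). T w n j)"
    by (auto simp: F_def T_def fun_eq_iff)
  also have "infsum (\<lambda>(n,j). T w n j) ?R = real(w-1)*lambda_odd w"
    using hT by (rule infsumI)
  finally show ?thesis .
qed


end
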